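(* Let $\alpha > 1$. (i) For integers $1 \le t \le k \le n$ with $t < n$, $\lambda_\alpha(S^k_{t,n}) = k!\binom{n-t}{k-t} k^{-k/\alpha}\left(\frac{k-t}{n-t}\right)^{(k-t)/\alpha}$ (with $0^0 = 1$). (ii) As $n\to\infty$, $\lambda_\alpha(B_n) = (1+O(n^{-2}))\, 6\, e(B_n)\, n^{-3/\alpha}$. (iii) For fixed $r \ge 2$, as $n \to\infty$, $\lambda_\alpha(T_{r,n}) = (1+O(n^{-2}))\, 2\, e(T_{r,n})\, n^{-2/\alpha}$.
   Context: $S^k_{t,n}$ is the $n$-vertex $k$-uniform hypergraph whose edges are all $k$-sets containing a fixed $t$-set of vertices (the complete $t$-star). $B_n$ is the $3$-uniform hypergraph on $n$ vertices split into parts of sizes $\lfloor n/2\rfloor$ and $\lceil n/2\rceil$, whose edges are all triples meeting both parts. $T_{r,n}$ is the complete $r$-partite graph on $n$ vertices with part sizes as equal as possible. $e(\cdot)$ is the number of edges. For a $k$-uniform hypergraph $H$ on $[n]$, $\lambda_\alpha(H) = \max\{k!\sum_{\{i_1,\dots,i_k\}\in E(H)}x_{i_1}\cdots x_{i_k} : x\in\mathbb{R}^n,\ \|x\|_\alpha = 1\}$ where $\|x\|_\alpha = (\sum_i|x_i|^\alpha)^{1/\alpha}$; graphs are the case $k=2$. The implied constants in $O(\cdot)$ may depend on $\alpha$ (and $r$). *)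

theory Defs
  imports "HOL-Analysis.Analysis" "HOL-Library.Landau_Symbols"
begin

text \<open>A k-uniform hypergraph on the vertex set [n] = {0..<n} is given by its edge set,
  a set of k-subsets of {0..<n}. Vectors x in R^n are functions nat => real; only the
  coordinates below n matter.\<close>

definition alpha_norm :: "real \<Rightarrow> nat \<Rightarrow> (nat \<Rightarrow> real) \<Rightarrow> real" where
  "alpha_norm \<alpha> n x = (\<Sum>i<n. \<bar>x i\<bar> powr \<alpha>) powr (1 / \<alpha>)"

definition lambda_alpha :: "real \<Rightarrow> nat \<Rightarrow> nat \<Rightarrow> nat set set \<Rightarrow> real" where
  "lambda_alpha \<alpha> n k E =
     Sup {fact k * (\<Sum>e\<in>E. \<Prod>i\<in>e. x i) | x. alpha_norm \<alpha> n x = 1}"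

definition star_edges :: "nat \<Rightarrow> nat \<Rightarrow> nat \<Rightarrow> nat set set" where
  "star_edges k t n = {e. e \<subseteq> {..<n} \<and> card e = k \<and> {..<t} \<subseteq> e}"

definition B_edges :: "nat \<Rightarrow> nat set set" where
  "B_edges n = {e. e \<subseteq> {..<n} \<and> card e = 3 \<and>
                   e \<inter> {..<n div 2} \<noteq> {} \<and> e \<inter> {n div 2..<n} \<noteq> {}}"

text \<open>Turan graph T_{r,n}: vertex i lies in part (i mod r); part sizes are as equal as
  possible. Edges are pairs from different parts.\<close>
definition turan_edges :: "nat \<Rightarrow> nat \<Rightarrow> nat set set" where
  "turan_edges r n = {e. e \<subseteq> {..<n} \<and> card e = 2 \<and>
                         (\<exists>i\<in>e. \<exists>j\<in>e. i mod r \<noteq> j mod r)}"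

end

theory Submission
  imports Defs
begin


lemma power_mean_sum:
  fixes a :: "'e \<Rightarrow> real" and \<alpha> :: real
  assumes fin: "finite E" and nn: "\<And>e. e \<in> E \<Longrightarrow> a e \<ge> 0" and al: "\<alpha> \<ge> 1"
  shows "sum a E \<le> real (card E) powr (1 - 1/\<alpha>) * (\<Sum>e\<in>E. a e powr \<alpha>) powr (1/\<alpha>)"
proof -
  define P where "P = {e\<in>E. a e > 0}"
  have PE: "P \<subseteq> E" and finP: "finite P" using fin by (auto simp: P_def)
  have s1: "sum a E = sum a P"
    by (rule sum.mono_neutral_right[OF fin PE]) (use nn in \<open>force simp: P_def\<close>)
  have s2: "(\<Sum>e\<in>E. a e powr \<alpha>) = (\<Sum>e\<in>P. a e powr \<alpha>)"
    by (rule sum.mono_neutral_right[OF fin PE]) (use nn in \<open>force simp: P_def\<close>)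
  show ?thesis
  proof (cases "P = {}")
    case True
    then show ?thesis using s1 by simp
  next
    case False
    define p where "p = real (card P)"
    have pp: "p > 0" using False finP by (simp add: p_def card_gt_0_iff)
    have pN: "p \<le> real (card E)" unfolding p_def using card_mono[OF fin PE] by simp
    have J: "(\<Sum>e\<in>P. (1/p) *\<^sub>R a e) powr \<alpha> \<le> (\<Sum>e\<in>P. (1/p) * a e powr \<alpha>)"
      by (rule convex_on_sum[OF finP False powr_convex[OF al]])
         (use pp in \<open>auto simp: P_def p_def\<close>)
    define S where "S = (\<Sum>e\<in>P. a e powr \<alpha>)"
    have S0: "S \<ge> 0" unfolding S_def by (simp add: sum_nonneg)
    have J2: "(sum a P / p) powr \<alpha> \<le> S / p"
      using J by (simp add: S_def sum_divide_distrib[symmetric] sum_distrib_left[symmetric] field_simps)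
    have m0: "sum a P / p \<ge> 0" using pp PE nn by (intro divide_nonneg_pos sum_nonneg) auto
    have "sum a P / p = ((sum a P / p) powr \<alpha>) powr (1/\<alpha>)"
      using al m0 by (simp add: powr_powr del: abs_divide)
    also have "\<dots> \<le> (S/p) powr (1/\<alpha>)"
      by (rule powr_mono2) (use J2 al in auto)
    finally have "sum a P \<le> p * (S/p) powr (1/\<alpha>)" using pp by (simp add: field_simps)
    also have "\<dots> = p powr (1 - 1/\<alpha>) * S powr (1/\<alpha>)"
      using pp S0 by (simp add: powr_divide powr_diff field_simps)
    also have "\<dots> \<le> real (card E) powr (1 - 1/\<alpha>) * S powr (1/\<alpha>)"
      by (rule mult_right_mono, rule powr_mono2) (use pN pp al in auto)
    finally show ?thesis using s1 s2 S_def by simp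
  qed
qed



definition esym :: "(nat \<Rightarrow> real) \<Rightarrow> nat set \<Rightarrow> nat \<Rightarrow> real" where
  "esym z S j = (\<Sum>F\<in>{F. F \<subseteq> S \<and> card F = j}. \<Prod>i\<in>F. z i)"

lemma esym_0: "finite S \<Longrightarrow> esym z S 0 = 1"
proof -
  assume "finite S"
  then have "{F. F \<subseteq> S \<and> card F = 0} = {{}}" by (auto dest: finite_subset)
  then show ?thesis by (simp add: esym_def)
qed

lemma esym_empty_Suc: "esym z {} (Suc j) = 0"
proof -
  have "{F. F \<subseteq> {} \<and> card F = Suc j} = {}" by auto
  then show ?thesis by (simp add: esym_def)
qed

lemma subsets_insert_Suc:
  assumes "finite S" "a \<notin> S"
  shows "{F. F \<subseteq> insert a S \<and> card F = Suc j} =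
         {F. F \<subseteq> S \<and> card F = Suc j} \<union> insert a ` {F. F \<subseteq> S \<and> card F = j}"
proof (intro equalityI subsetI)
  fix F assume F: "F \<in> {F. F \<subseteq> insert a S \<and> card F = Suc j}"
  show "F \<in> {F. F \<subseteq> S \<and> card F = Suc j} \<union> insert a ` {F. F \<subseteq> S \<and> card F = j}"
  proof (cases "a \<in> F")
    case True
    have fF: "finite F" using F assms(1) finite_subset by auto
    have "F = insert a (F - {a})" using True by auto
    moreover have "F - {a} \<subseteq> S" "card (F - {a}) = j" using F True fF by auto
    ultimately show ?thesis by blast
  next
    case False
    then show ?thesis using F by auto
  qed
next
  fix F assume "F \<in> {F. F \<subseteq> S \<and> card F = Suc j} \<union> insert a ` {F. F \<subseteq> S \<and> card F = j}"
  then show "F \<in> {F. F \<subseteq> insert a S \<and> card F = Suc j}"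
    using assms by auto (metis card_insert_disjoint finite_subset subsetD)
qed

lemma esym_insert:
  assumes "finite S" "a \<notin> S"
  shows "esym z (insert a S) (Suc j) = esym z S (Suc j) + z a * esym z S j"
proof -
  have fin1: "finite {F. F \<subseteq> S \<and> card F = Suc j}" and fin2: "finite {F. F \<subseteq> S \<and> card F = j}"
    using assms(1) by auto
  have inj: "inj_on (insert a) {F. F \<subseteq> S \<and> card F = j}"
    using assms(2) by (auto simp: inj_on_def)
  have disj: "{F. F \<subseteq> S \<and> card F = Suc j} \<inter> insert a ` {F. F \<subseteq> S \<and> card F = j} = {}"
    using assms(2) by auto
  have "esym z (insert a S) (Suc j) = esym z S (Suc j) +
          (\<Sum>F\<in>insert a ` {F. F \<subseteq> S \<and> card F = j}. \<Prod>i\<in>F. z i)"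
    unfolding esym_def subsets_insert_Suc[OF assms]
    by (rule sum.union_disjoint[OF fin1 finite_imageI[OF fin2] disj])
  also have "(\<Sum>F\<in>insert a ` {F. F \<subseteq> S \<and> card F = j}. \<Prod>i\<in>F. z i)
      = (\<Sum>F\<in>{F. F \<subseteq> S \<and> card F = j}. \<Prod>i\<in>insert a F. z i)"
    by (rule sum.reindex[OF inj, unfolded comp_def])
  also have "\<dots> = (\<Sum>F\<in>{F. F \<subseteq> S \<and> card F = j}. z a * (\<Prod>i\<in>F. z i))"
    by (rule sum.cong) (use assms in \<open>auto dest: finite_subset intro!: prod.insert\<close>)
  also have "\<dots> = z a * esym z S j" by (simp add: esym_def sum_distrib_left)
  finally show ?thesis .
qed

lemma esym_1: "finite S \<Longrightarrow> esym z S 1 = sum z S"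
  by (induction S rule: finite_induct) (auto simp: esym_empty_Suc[of z 0, simplified] esym_insert[of _ _ z 0, simplified] esym_0)

lemma esym_2: "finite S \<Longrightarrow> 2 * esym z S 2 = (sum z S)^2 - (\<Sum>i\<in>S. z i ^ 2)"
proof (induction S rule: finite_induct)
  case empty
  then show ?case using esym_empty_Suc[of z 1] by (simp add: numeral_2_eq_2)
next
  case (insert a S)
  have "esym z (insert a S) 2 = esym z S 2 + z a * esym z S 1"
    using esym_insert[OF insert(1,2), of z 1] by (simp add: numeral_2_eq_2)
  then show ?case using insert esym_1[OF insert(1)] by (simp add: algebra_simps power2_eq_square)
qed

lemma esym_3: "finite S \<Longrightarrow> 6 * esym z S 3 = (sum z S)^3 - 3 * sum z S * (\<Sum>i\<in>S. z i ^ 2) + 2 * (\<Sum>i\<in>S. z i ^ 3)"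
proof (induction S rule: finite_induct)
  case empty
  then show ?case using esym_empty_Suc[of z 2] by (simp add: numeral_3_eq_3)
next
  case (insert a S)
  have "esym z (insert a S) 3 = esym z S 3 + z a * esym z S 2"
    using esym_insert[OF insert(1,2), of z 2] by (simp add: numeral_3_eq_3 numeral_2_eq_2)
  moreover have "esym z S 2 = ((sum z S)^2 - (\<Sum>i\<in>S. z i ^ 2)) / 2"
    using esym_2[OF insert(1), of z] by simp
  ultimately show ?case using insert by (simp add: algebra_simps power2_eq_square power3_eq_cube) (simp add: field_simps)
qed



lemma tangent_pow:
  fixes t u :: real
  assumes "t \<ge> 0" "u \<ge> 0"
  shows "t ^ Suc i \<ge> u ^ Suc i + real (Suc i) * u ^ i * (t - u)"
proof (induction i)
  case 0
  then show ?case by simp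
next
  case (Suc i)
  have "t ^ Suc (Suc i) = t * t ^ Suc i" by simp
  also have "\<dots> \<ge> t * (u ^ Suc i + real (Suc i) * u ^ i * (t - u))"
    using Suc assms(1) by (intro mult_left_mono) auto
  finally have h: "t ^ Suc (Suc i) \<ge> t * (u ^ Suc i + real (Suc i) * u ^ i * (t - u))" .
  have "t * (u ^ Suc i + real (Suc i) * u ^ i * (t - u)) - (u ^ Suc (Suc i) + real (Suc (Suc i)) * u ^ Suc i * (t - u))
     = real (Suc i) * u ^ i * (t - u)^2"
    by (simp add: algebra_simps power2_eq_square)
  moreover have "real (Suc i) * u ^ i * (t - u)^2 \<ge> 0" using assms by simp
  ultimately show ?case using h by linarith
qed

lemma maclaurin:
  assumes "finite S" "\<And>i. i \<in> S \<Longrightarrow> z i \<ge> 0"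
  shows "esym z S j \<le> real (card S choose j) * (sum z S / real (card S)) ^ j"
  using assms
proof (induction S arbitrary: j rule: finite_induct)
  case empty
  then show ?case by (cases j) (auto simp: esym_0 esym_empty_Suc)
next
  case (insert a S)
  show ?case
  proof (cases j)
    case 0
    then show ?thesis using insert by (simp add: esym_0)
  next
    case (Suc i)
    define m where "m = card S"
    define u where "u = sum z S / real m"
    have u0: "u \<ge> 0" using insert by (simp add: u_def sum_nonneg)
    have su: "sum z S = real m * u"
      by (cases "m = 0") (use insert in \<open>auto simp: u_def m_def\<close>)
    have za: "z a \<ge> 0" using insert by simp
    have IH1: "esym z S (Suc i) \<le> real (m choose Suc i) * u ^ Suc i"
      using insert(3)[of "Suc i"] insert(4) unfolding m_def u_def by simp
    have IH2: "esym z S i \<le> real (m choose i) * u ^ i"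
      using insert(3)[of i] insert(4) unfolding m_def u_def by simp
    have "esym z (insert a S) j = esym z S (Suc i) + z a * esym z S i"
      using esym_insert[OF insert(1,2)] Suc by simp
    also have "\<dots> \<le> real (m choose Suc i) * u ^ Suc i + z a * (real (m choose i) * u ^ i)"
      using IH1 IH2 za by (intro add_mono mult_left_mono) auto
    also have "\<dots> \<le> real (Suc m choose Suc i) * ((z a + real m * u) / real (Suc m)) ^ Suc i"
    proof -
      define t where "t = (z a + real m * u) / real (Suc m)"
      have t0: "t \<ge> 0" using za u0 by (simp add: t_def)
      have tu: "t - u = (z a - u) / real (Suc m)" by (simp add: t_def field_simps)
      have binom: "real (Suc m choose Suc i) * real (Suc i) = real (Suc m) * real (m choose i)"
        using Suc_times_binomial_eq[of m i] by (metis of_nat_mult)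
      have pas: "real (Suc m choose Suc i) = real (m choose i) + real (m choose Suc i)" by simp
      have "real (Suc m choose Suc i) * t ^ Suc i \<ge>
            real (Suc m choose Suc i) * (u ^ Suc i + real (Suc i) * u ^ i * (t - u))"
        by (rule mult_left_mono[OF tangent_pow[OF t0 u0]]) simp
      also have "real (Suc m choose Suc i) * (u ^ Suc i + real (Suc i) * u ^ i * (t - u))
          = real (Suc m choose Suc i) * u ^ Suc i + real (m choose i) * u ^ i * (z a - u)"
      proof -
        have "real (Suc m choose Suc i) * (real (Suc i) * u ^ i * (t - u))
             = (real (Suc m choose Suc i) * real (Suc i)) * u ^ i * ((z a - u) / real (Suc m))"
          by (simp add: tu)
        also have "\<dots> = real (m choose i) * u ^ i * (z a - u)"
          unfolding binom by (simp add: field_simps)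
        finally show ?thesis by (simp add: distrib_left)
      qed
      also have "\<dots> = real (m choose Suc i) * u ^ Suc i + z a * (real (m choose i) * u ^ i)"
        unfolding pas by (simp add: algebra_simps)
      finally show ?thesis by (simp add: t_def)
    qed
    also have "\<dots> = real (card (insert a S) choose j) * (sum z (insert a S) / real (card (insert a S))) ^ j"
      using insert Suc su by (simp add: m_def)
    finally show ?thesis .
  qed
qed



lemma norm_one_iff:
  assumes "\<alpha> > 0"
  shows "alpha_norm \<alpha> n x = 1 \<longleftrightarrow> (\<Sum>i<n. \<bar>x i\<bar> powr \<alpha>) = 1"
proof -
  define S where "S = (\<Sum>i<n. \<bar>x i\<bar> powr \<alpha>)"
  have S0: "S \<ge> 0" by (simp add: S_def sum_nonneg)
  have "S powr (1/\<alpha>) = 1 \<longleftrightarrow> S = 1"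
  proof
    assume h: "S powr (1/\<alpha>) = 1"
    then have "S \<noteq> 0" by auto
    then have "S = (S powr (1/\<alpha>)) powr \<alpha>" using S0 assms by (simp add: powr_powr)
    then show "S = 1" using h by simp
  qed simp
  then show ?thesis by (simp add: alpha_norm_def S_def)
qed

lemma upper_elem:
  fixes \<alpha> \<Lambda> :: real
  assumes al: "\<alpha> > 1" and fin: "finite E"
    and H: "\<And>z. (\<forall>i. 0 \<le> z i) \<Longrightarrow> (\<Sum>i<n. z i) = 1 \<Longrightarrow> (\<Sum>e\<in>E. \<Prod>i\<in>e. z i) \<le> \<Lambda>"
    and xn: "alpha_norm \<alpha> n x = 1"
  shows "fact k * (\<Sum>e\<in>E. \<Prod>i\<in>e. x i) \<le> fact k * (real (card E) powr (1 - 1/\<alpha>) * \<Lambda> powr (1/\<alpha>))"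
proof -
  define z where "z i = \<bar>x i\<bar> powr \<alpha>" for i
  have z0: "\<forall>i. 0 \<le> z i" by (simp add: z_def)
  have zs: "(\<Sum>i<n. z i) = 1" using xn norm_one_iff[of \<alpha> n x] al by (simp add: z_def)
  have HL: "(\<Sum>e\<in>E. \<Prod>i\<in>e. z i) \<le> \<Lambda>" by (rule H[OF z0 zs])
  have "(\<Sum>e\<in>E. \<Prod>i\<in>e. x i) \<le> \<bar>\<Sum>e\<in>E. \<Prod>i\<in>e. x i\<bar>" by simp
  also have "\<dots> \<le> (\<Sum>e\<in>E. \<bar>\<Prod>i\<in>e. x i\<bar>)" by (rule sum_abs)
  also have "\<dots> = (\<Sum>e\<in>E. \<Prod>i\<in>e. \<bar>x i\<bar>)" by (simp add: abs_prod)
  also have "\<dots> \<le> real (card E) powr (1 - 1/\<alpha>) * (\<Sum>e\<in>E. (\<Prod>i\<in>e. \<bar>x i\<bar>) powr \<alpha>) powr (1/\<alpha>)"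
    by (rule power_mean_sum[OF fin]) (use al in \<open>auto simp: prod_nonneg\<close>)
  also have "(\<Sum>e\<in>E. (\<Prod>i\<in>e. \<bar>x i\<bar>) powr \<alpha>) = (\<Sum>e\<in>E. \<Prod>i\<in>e. z i)"
    by (simp add: prod_powr_distrib z_def)
  also have "real (card E) powr (1 - 1/\<alpha>) * (\<Sum>e\<in>E. \<Prod>i\<in>e. z i) powr (1/\<alpha>)
      \<le> real (card E) powr (1 - 1/\<alpha>) * \<Lambda> powr (1/\<alpha>)"
    by (intro mult_left_mono powr_mono2) (use al HL z0 in \<open>auto simp: sum_nonneg prod_nonneg\<close>)
  finally show ?thesis by simp
qed

lemma lambda_bounds:
  fixes \<alpha> \<Lambda> :: real
  assumes al: "\<alpha> > 1" and fin: "finite E"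
    and H: "\<And>z. (\<forall>i. 0 \<le> z i) \<Longrightarrow> (\<Sum>i<n. z i) = 1 \<Longrightarrow> (\<Sum>e\<in>E. \<Prod>i\<in>e. z i) \<le> \<Lambda>"
    and x0: "alpha_norm \<alpha> n x0 = 1"
  shows "fact k * (\<Sum>e\<in>E. \<Prod>i\<in>e. x0 i) \<le> lambda_alpha \<alpha> n k E"
    and "lambda_alpha \<alpha> n k E \<le> fact k * (real (card E) powr (1 - 1/\<alpha>) * \<Lambda> powr (1/\<alpha>))"
proof -
  define X where "X = {fact k * (\<Sum>e\<in>E. \<Prod>i\<in>e. x i) | x. alpha_norm \<alpha> n x = 1}"
  have ub: "\<And>v. v \<in> X \<Longrightarrow> v \<le> fact k * (real (card E) powr (1 - 1/\<alpha>) * \<Lambda> powr (1/\<alpha>))"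
    unfolding X_def using upper_elem[OF al fin H] by blast
  have mem: "fact k * (\<Sum>e\<in>E. \<Prod>i\<in>e. x0 i) \<in> X" unfolding X_def using x0 by blast
  have bdd: "bdd_above X" using ub by (intro bdd_aboveI) 
  show "fact k * (\<Sum>e\<in>E. \<Prod>i\<in>e. x0 i) \<le> lambda_alpha \<alpha> n k E"
    unfolding lambda_alpha_def X_def[symmetric] by (rule cSup_upper[OF mem bdd])
  show "lambda_alpha \<alpha> n k E \<le> fact k * (real (card E) powr (1 - 1/\<alpha>) * \<Lambda> powr (1/\<alpha>))"
    unfolding lambda_alpha_def X_def[symmetric] using mem ub by (intro cSup_least) auto
qed

lemma sum_const_edges:
  assumes "\<And>e. e \<in> E \<Longrightarrow> card e = k"
  shows "(\<Sum>e\<in>E. \<Prod>i\<in>e. c) = real (card E) * c ^ k"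
  using assms by simp

lemma uniform_norm:
  assumes al: "\<alpha> > 1" and n: "n > 0"
  shows "alpha_norm \<alpha> n (\<lambda>i. real n powr (-1/\<alpha>)) = 1"
proof -
  have "(\<Sum>i<n. \<bar>real n powr (-1/\<alpha>)\<bar> powr \<alpha>) = real n * (real n powr (-1/\<alpha>)) powr \<alpha>" by simp
  also have "(real n powr (-1/\<alpha>)) powr \<alpha> = real n powr (-1)" using al by (simp add: powr_powr)
  also have "real n * real n powr (-1) = 1" using n by (simp add: powr_minus)
  finally show ?thesis using norm_one_iff[of \<alpha> n] al by simp
qed



lemma pow_powr_comm:
  fixes y :: real assumes "y \<ge> 0"
  shows "(y powr a) ^ j = (y ^ j) powr a"
proof -
  have "(y ^ j) powr a = (\<Prod>i<j. y) powr a" by simp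
  also have "\<dots> = (\<Prod>i<j. y powr a)" by (rule prod_powr_distrib)
  finally show ?thesis by simp
qed

lemma amgm:
  fixes w :: "nat \<Rightarrow> real"
  assumes "k > 0" "\<And>i. i < k \<Longrightarrow> w i \<ge> 0"
  shows "(\<Prod>i<k. w i) \<le> ((\<Sum>i<k. w i) / real k) ^ k"
proof -
  define P where "P = (\<Prod>i<k. w i)"
  have P0: "P \<ge> 0" unfolding P_def using assms by (intro prod_nonneg) auto
  have "P powr (1 / real (card {..<k})) \<le> (\<Sum>i\<in>{..<k}. w i / real (card {..<k}))"
    unfolding P_def by (rule arith_geom_mean) (use assms in auto)
  then have h: "P powr (1 / real k) \<le> (\<Sum>i<k. w i) / real k" by (simp add: sum_divide_distrib)
  have "P = (P powr (1 / real k)) ^ k"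
    using P0 assms(1) by (cases "P = 0") (auto simp: powr_power)
  also have "\<dots> \<le> ((\<Sum>i<k. w i) / real k) ^ k" by (rule power_mono[OF h]) simp
  finally show ?thesis by (simp add: P_def)
qed

context
  fixes k t n :: nat
  assumes tk: "1 \<le> t" "t \<le> k" "k \<le> n" "t < n"
begin

lemma star_image:
  "star_edges k t n = (\<lambda>F. {..<t} \<union> F) ` {F. F \<subseteq> {t..<n} \<and> card F = k - t}"
proof (intro equalityI subsetI)
  fix e assume e: "e \<in> star_edges k t n"
  then have e1: "e \<subseteq> {..<n}" "card e = k" "{..<t} \<subseteq> e" by (auto simp: star_edges_def)
  have fe: "finite e" using e1(1) finite_subset by blast
  have "e - {..<t} \<subseteq> {t..<n}" using e1 by auto
  moreover have "card (e - {..<t}) = k - t" using e1 fe by (simp add: card_Diff_subset)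
  moreover have "e = {..<t} \<union> (e - {..<t})" using e1 by auto
  ultimately show "e \<in> (\<lambda>F. {..<t} \<union> F) ` {F. F \<subseteq> {t..<n} \<and> card F = k - t}" by blast
next
  fix e assume "e \<in> (\<lambda>F. {..<t} \<union> F) ` {F. F \<subseteq> {t..<n} \<and> card F = k - t}"
  then obtain F where F: "F \<subseteq> {t..<n}" "card F = k - t" "e = {..<t} \<union> F" by blast
  have fF: "finite F" using F(1) finite_subset by blast
  have "card e = t + (k - t)" using F fF by (subst F(3), subst card_Un_disjoint) auto
  then show "e \<in> star_edges k t n" using F tk by (auto simp: star_edges_def)
qed

lemma star_inj: "inj_on (\<lambda>F. {..<t} \<union> F) {F. F \<subseteq> {t..<n} \<and> card F = k - t}"
proof (rule inj_onI)
  fix F G assume "F \<in> {F. F \<subseteq> {t..<n} \<and> card F = k - t}" "G \<in> {F. F \<subseteq> {t..<n} \<and> card F = k - t}"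
    "{..<t} \<union> F = {..<t} \<union> G"
  then show "F = G" by (auto simp: set_eq_iff) (metis atLeastLessThan_iff leD lessThan_iff subsetD)+
qed

lemma star_sum: "(\<Sum>e\<in>star_edges k t n. \<Prod>i\<in>e. z i) = (\<Prod>i<t. z i) * esym z {t..<n} (k - t)"
proof -
  have "(\<Sum>e\<in>star_edges k t n. \<Prod>i\<in>e. z i) = (\<Sum>F\<in>{F. F \<subseteq> {t..<n} \<and> card F = k - t}. \<Prod>i\<in>{..<t} \<union> F. z i)"
    unfolding star_image by (rule sum.reindex[OF star_inj, unfolded comp_def])
  also have "\<dots> = (\<Sum>F\<in>{F. F \<subseteq> {t..<n} \<and> card F = k - t}. (\<Prod>i<t. z i) * (\<Prod>i\<in>F. z i))"
    by (rule sum.cong[OF refl], rule prod.union_disjoint) (auto dest: finite_subset)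
  finally show ?thesis by (simp add: esym_def sum_distrib_left)
qed

lemma star_card: "card (star_edges k t n) = (n - t) choose (k - t)"
  unfolding star_image by (subst card_image[OF star_inj]) (simp add: n_subsets)

lemma star_finite: "finite (star_edges k t n)"
  unfolding star_image by simp

lemma star_lagr:
  assumes z0: "\<forall>i. 0 \<le> z i" and zs: "(\<Sum>i<n. z i) = 1"
  shows "(\<Sum>e\<in>star_edges k t n. \<Prod>i\<in>e. z i)
     \<le> real ((n - t) choose (k - t)) * (1 / real k) ^ k * (real (k - t) / real (n - t)) ^ (k - t)"
proof -
  define j where "j = k - t"
  define m where "m = n - t"
  define s where "s = (\<Sum>i\<in>{t..<n}. z i)"
  have split: "(\<Sum>i<t. z i) + s = 1"
  proof -
    have "{..<n} = {..<t} \<union> {t..<n}" using tk by auto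
    moreover have "sum z ({..<t} \<union> {t..<n}) = sum z {..<t} + sum z {t..<n}"
      by (rule sum.union_disjoint) auto
    ultimately show ?thesis using zs by (simp add: s_def)
  qed
  have s0: "s \<ge> 0" using z0 by (simp add: s_def sum_nonneg)
  have P0: "(\<Prod>i<t. z i) \<ge> 0" using z0 by (simp add: prod_nonneg)
  have "(\<Sum>e\<in>star_edges k t n. \<Prod>i\<in>e. z i) = (\<Prod>i<t. z i) * esym z {t..<n} j"
    by (simp add: star_sum j_def)
  also have "\<dots> \<le> (\<Prod>i<t. z i) * (real (m choose j) * (s / real m) ^ j)"
    using maclaurin[of "{t..<n}" z j] z0 P0 by (intro mult_left_mono) (auto simp: s_def m_def)
  also have "\<dots> = real (m choose j) * ((\<Prod>i<t. z i) * (s / real j) ^ j) * (real j / real m) ^ j"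
  proof (cases "j = 0")
    case False
    have "(s / real m) ^ j = (s / real j) ^ j * (real j / real m) ^ j"
      using False by (simp add: power_mult_distrib[symmetric])
    then show ?thesis by simp
  qed simp
  also have "\<dots> \<le> real (m choose j) * (1 / real k) ^ k * (real j / real m) ^ j"
  proof -
    define w where "w i = (if i < t then z i else s / real j)" for i
    have w0: "\<And>i. i < k \<Longrightarrow> w i \<ge> 0" using z0 s0 by (simp add: w_def)
    have kk: "{..<k} = {..<t} \<union> {t..<k}" using tk by auto
    have pw: "(\<Prod>i<k. w i) = (\<Prod>i<t. z i) * (s / real j) ^ j"
      unfolding kk by (subst prod.union_disjoint) (auto simp: w_def j_def simp del: of_nat_diff)
    have sw: "(\<Sum>i<k. w i) = (\<Sum>i<t. z i) + real j * (s / real j)"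
      unfolding kk by (subst sum.union_disjoint) (auto simp: w_def j_def simp del: of_nat_diff)
    have "real j * (s / real j) \<le> s" using s0 by (cases "j = 0") auto
    then have sw1: "(\<Sum>i<k. w i) \<le> 1" using sw split by linarith
    have sw0: "(\<Sum>i<k. w i) \<ge> 0" using w0 by (intro sum_nonneg) auto
    have "(\<Prod>i<t. z i) * (s / real j) ^ j \<le> ((\<Sum>i<k. w i) / real k) ^ k"
      unfolding pw[symmetric] by (rule amgm) (use tk w0 in auto)
    also have "\<dots> \<le> (1 / real k) ^ k"
      using sw1 sw0 tk by (intro power_mono divide_right_mono) auto
    finally show ?thesis by (intro mult_right_mono mult_left_mono) auto
  qed
  finally show ?thesis by (simp add: j_def m_def)
qed


lemma part1:
  fixes \<alpha> :: real assumes al: "\<alpha> > 1"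
  shows "lambda_alpha \<alpha> n k (star_edges k t n) =
              fact k * real ((n - t) choose (k - t)) * real k powr (- real k / \<alpha>)
              * ((real (k - t) / real (n - t)) ^ (k - t)) powr (1 / \<alpha>)"
proof -
  define j where "j = k - t"
  define m where "m = n - t"
  define C where "C = real (m choose j)"
  define \<gamma> where "\<gamma> = 1 / \<alpha>"
  have al0: "\<alpha> > 0" using al by simp
  have kpos: "real k > 0" using tk by simp
  have mpos: "real m > 0" using tk by (simp add: m_def)
  have jm: "j \<le> m" using tk by (simp add: j_def m_def)
  have Cpos: "C > 0" using jm by (simp add: C_def)
  have jk: "t + j = k" using tk by (simp add: j_def)
  define RHS where "RHS = fact k * C * real k powr (- real k / \<alpha>) * ((real j / real m) ^ j) powr \<gamma>"
  have kpow: "((1 / real k) ^ k) powr \<gamma> = real k powr (- real k / \<alpha>)"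
  proof -
    have "((1 / real k) ^ k) powr \<gamma> = ((1 / real k) powr \<gamma>) ^ k"
      by (rule pow_powr_comm[symmetric]) simp
    also have "(1 / real k) powr \<gamma> = real k powr (- \<gamma>)"
      using kpos by (simp add: powr_divide powr_minus_divide)
    also have "(real k powr (- \<gamma>)) ^ k = real k powr (real k * - \<gamma>)"
      using kpos by (simp add: powr_power)
    finally show ?thesis by (simp add: \<gamma>_def)
  qed
  define \<Lambda> where "\<Lambda> = C * (1 / real k) ^ k * (real j / real m) ^ j"
  have up_eq: "fact k * (C powr (1 - \<gamma>) * \<Lambda> powr \<gamma>) = RHS"
  proof -
    have h1: "\<Lambda> powr \<gamma> = C powr \<gamma> * ((1 / real k) ^ k) powr \<gamma> * ((real j / real m) ^ j) powr \<gamma>"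
      unfolding \<Lambda>_def using Cpos by (simp add: powr_mult)
    have h2: "C powr (1 - \<gamma>) * C powr \<gamma> = C"
      using Cpos by (simp add: powr_add[symmetric])
    have "fact k * (C powr (1 - \<gamma>) * \<Lambda> powr \<gamma>) = fact k * (C powr (1 - \<gamma>) * C powr \<gamma>) * ((1 / real k) ^ k) powr \<gamma> * ((real j / real m) ^ j) powr \<gamma>"
      unfolding h1 by (simp only: mult_ac)
    then show ?thesis unfolding h2 RHS_def kpow .
  qed
  have H: "\<And>z. (\<forall>i. 0 \<le> z i) \<Longrightarrow> (\<Sum>i<n. z i) = 1 \<Longrightarrow> (\<Sum>e\<in>star_edges k t n. \<Prod>i\<in>e. z i) \<le> \<Lambda>"
    using star_lagr by (simp add: \<Lambda>_def C_def j_def m_def)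
  define b where "b = (real j / (real k * real m)) powr \<gamma>"
  define x0 where "x0 i = (if i < t then real k powr (- \<gamma>) else b)" for i
  have x0n: "alpha_norm \<alpha> n x0 = 1"
  proof -
    have nn: "{..<n} = {..<t} \<union> {t..<n}" using tk by auto
    have "(\<Sum>i<n. \<bar>x0 i\<bar> powr \<alpha>) = (\<Sum>i<t. \<bar>x0 i\<bar> powr \<alpha>) + (\<Sum>i\<in>{t..<n}. \<bar>x0 i\<bar> powr \<alpha>)"
      unfolding nn by (rule sum.union_disjoint) auto
    also have "(\<Sum>i<t. \<bar>x0 i\<bar> powr \<alpha>) = real t * (real k powr (- \<gamma>)) powr \<alpha>"
      by (simp add: x0_def)
    also have "(real k powr (- \<gamma>)) powr \<alpha> = 1 / real k"
    proof -
      have "(real k powr (- \<gamma>)) powr \<alpha> = real k powr (- \<gamma> * \<alpha>)" by (rule powr_powr)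
      also have "- \<gamma> * \<alpha> = - 1" using al0 by (simp add: \<gamma>_def)
      finally show ?thesis by (simp add: powr_minus_divide)
    qed
    also have "(\<Sum>i\<in>{t..<n}. \<bar>x0 i\<bar> powr \<alpha>) = real m * b powr \<alpha>"
    proof -
      have b0: "b \<ge> 0" by (simp add: b_def)
      have "(\<Sum>i\<in>{t..<n}. \<bar>x0 i\<bar> powr \<alpha>) = (\<Sum>i\<in>{t..<n}. b powr \<alpha>)"
        using b0 by (intro sum.cong) (auto simp: x0_def)
      then show ?thesis by (simp add: m_def)
    qed
    also have "b powr \<alpha> = real j / (real k * real m)"
      using al0 by (simp add: b_def powr_powr \<gamma>_def)
    also have "real t * (1 / real k) + real m * (real j / (real k * real m)) = 1"
      using kpos mpos jk by (simp add: field_simps flip: of_nat_add)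
    finally show ?thesis using norm_one_iff[OF al0] by simp
  qed
  have val: "(\<Sum>e\<in>star_edges k t n. \<Prod>i\<in>e. x0 i) = (real k powr (- \<gamma>)) ^ t * (C * b ^ j)"
  proof -
    have "esym x0 {t..<n} j = (\<Sum>F\<in>{F. F \<subseteq> {t..<n} \<and> card F = j}. b ^ j)"
      unfolding esym_def
    proof (rule sum.cong[OF refl])
      fix F assume "F \<in> {F. F \<subseteq> {t..<n} \<and> card F = j}"
      then have "(\<Prod>i\<in>F. x0 i) = (\<Prod>i\<in>F. b)" by (intro prod.cong) (auto simp: x0_def)
      then show "(\<Prod>i\<in>F. x0 i) = b ^ j" using \<open>F \<in> _\<close> by simp
    qed
    also have "\<dots> = C * b ^ j" by (simp add: n_subsets C_def m_def)
    finally have e: "esym x0 {t..<n} j = C * b ^ j" .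
    have p: "(\<Prod>i<t. x0 i) = (real k powr (- \<gamma>)) ^ t" by (simp add: x0_def)
    show ?thesis using star_sum[of x0] e p by (simp add: j_def)
  qed
  have low_eq: "fact k * ((real k powr (- \<gamma>)) ^ t * (C * b ^ j)) = RHS"
  proof (cases "j = 0")
    case True
    then have "t = k" using jk by simp
    then show ?thesis using True kpos unfolding RHS_def by (simp add: powr_power \<gamma>_def)
  next
    case False
    have jpos: "real j > 0" using False by simp
    have "b ^ j = (real j / (real k * real m)) powr (real j * \<gamma>)"
      unfolding b_def using jpos kpos mpos by (simp add: powr_power)
    also have "\<dots> = (real j / real m) powr (real j * \<gamma>) * real k powr (- (real j * \<gamma>))"
      using jpos kpos mpos by (simp add: powr_divide powr_mult powr_minus_divide)
    finally have bj: "b ^ j = (real j / real m) powr (real j * \<gamma>) * real k powr (- (real j * \<gamma>))" .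
    have jm2: "((real j / real m) ^ j) powr \<gamma> = (real j / real m) powr (real j * \<gamma>)"
      using jpos mpos by (simp add: pow_powr_comm[symmetric] powr_power)
    have kt: "(real k powr (- \<gamma>)) ^ t = real k powr (real t * - \<gamma>)"
      using kpos by (simp add: powr_power)
    have kk: "real k powr (real t * - \<gamma>) * real k powr (- (real j * \<gamma>)) = real k powr (- real k / \<alpha>)"
    proof -
      have "real t + real j = real k" using jk by (simp flip: of_nat_add)
      have "real t * - \<gamma> + - (real j * \<gamma>) = - (real t + real j) * \<gamma>" by (simp add: algebra_simps)
      also have "\<dots> = - real k / \<alpha>" using \<open>real t + real j = real k\<close> by (simp add: \<gamma>_def)
      finally have "real t * - \<gamma> + - (real j * \<gamma>) = - real k / \<alpha>" .
      then show ?thesis by (simp add: powr_add[symmetric])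
    qed
    show ?thesis unfolding RHS_def bj jm2 kt kk[symmetric] by (simp only: mult_ac)
  qed
  have lo: "fact k * (\<Sum>e\<in>star_edges k t n. \<Prod>i\<in>e. x0 i) \<le> lambda_alpha \<alpha> n k (star_edges k t n)"
    and hi: "lambda_alpha \<alpha> n k (star_edges k t n) \<le> fact k * (real (card (star_edges k t n)) powr (1 - 1/\<alpha>) * \<Lambda> powr (1/\<alpha>))"
    using lambda_bounds[OF al star_finite H x0n] by auto
  have c: "real (card (star_edges k t n)) = C" by (simp add: star_card C_def j_def m_def)
  have r1: "RHS \<le> lambda_alpha \<alpha> n k (star_edges k t n)" using lo unfolding val low_eq .
  have r2: "lambda_alpha \<alpha> n k (star_edges k t n) \<le> RHS" using hi unfolding c \<gamma>_def[symmetric] up_eq .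
  have "lambda_alpha \<alpha> n k (star_edges k t n) = RHS" using r1 r2 by linarith
  then show ?thesis unfolding RHS_def C_def j_def m_def \<gamma>_def .
qed

end



lemma close_bound:
  fixes N \<Lambda> c nn F \<gamma> :: real
  assumes g: "0 < \<gamma>" "\<gamma> \<le> 1" and N: "N > 0" and nn: "nn > 0" and L0: "\<Lambda> \<ge> 0"
    and c: "c \<ge> 0" and F: "F \<ge> 0" and h: "\<Lambda> * nn \<le> N * (1 + c)"
  shows "F * (N powr (1 - \<gamma>) * \<Lambda> powr \<gamma>) \<le> (F * N * nn powr (- \<gamma>)) * (1 + c)"
proof -
  have "\<Lambda> \<le> N * (1 + c) / nn" using h nn by (simp add: field_simps)
  then have "\<Lambda> powr \<gamma> \<le> (N * (1 + c) / nn) powr \<gamma>" using L0 g by (intro powr_mono2) auto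
  also have "\<dots> = N powr \<gamma> * (1 + c) powr \<gamma> * nn powr (- \<gamma>)"
    using N nn c by (simp add: powr_mult powr_divide powr_minus_divide)
  also have "\<dots> \<le> N powr \<gamma> * (1 + c) * nn powr (- \<gamma>)"
  proof -
    have "(1 + c) powr \<gamma> \<le> (1 + c) powr 1" using c g by (intro powr_mono) auto
    then show ?thesis using c by (intro mult_right_mono mult_left_mono) auto
  qed
  finally have "N powr (1 - \<gamma>) * \<Lambda> powr \<gamma> \<le> N powr (1 - \<gamma>) * (N powr \<gamma> * (1 + c) * nn powr (- \<gamma>))"
    by (intro mult_left_mono) auto
  also have "\<dots> = (N powr (1 - \<gamma>) * N powr \<gamma>) * nn powr (- \<gamma>) * (1 + c)" by (simp only: mult_ac)
  also have "N powr (1 - \<gamma>) * N powr \<gamma> = N" using N by (simp add: powr_add[symmetric])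
  finally show ?thesis using F by (simp add: mult_left_mono mult.assoc)
qed

lemma asymp_close:
  fixes L T :: "nat \<Rightarrow> real" and c :: real and nst :: nat
  assumes H: "\<And>n. n \<ge> nst \<Longrightarrow> T n > 0 \<and> T n \<le> L n \<and> L n \<le> T n * (1 + c / real n ^ 2)"
    and c: "c \<ge> 0"
  shows "\<exists>g :: nat \<Rightarrow> real. g \<in> O(\<lambda>n. 1 / real n ^ 2) \<and> (\<forall>\<^sub>F n in sequentially. L n = (1 + g n) * T n)"
proof (intro exI conjI)
  define g where "g n = L n / T n - 1" for n
  have ev: "\<forall>\<^sub>F n in sequentially. n \<ge> max nst 1" by (rule eventually_ge_at_top)
  show "\<forall>\<^sub>F n in sequentially. L n = (1 + (\<lambda>n. L n / T n - 1) n) * T n"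
    using ev by eventually_elim (use H in \<open>force simp: field_simps\<close>)
  show "(\<lambda>n. L n / T n - 1) \<in> O(\<lambda>n. 1 / real n ^ 2)"
  proof (rule bigoI[where c = c])
    show "\<forall>\<^sub>F n in sequentially. norm (L n / T n - 1) \<le> c * norm (1 / real n ^ 2)"
      using ev
    proof eventually_elim
      case (elim n)
      then have Hn: "T n > 0" "T n \<le> L n" "L n \<le> T n * (1 + c / real n ^ 2)" using H by auto
      have "1 \<le> L n / T n" using Hn by simp
      moreover have "L n / T n \<le> 1 + c / real n ^ 2" using Hn by (simp add: field_simps)
      ultimately show ?case by simp
    qed
  qed
qed



lemma B_decomp: "B_edges n = {F. F \<subseteq> {..<n} \<and> card F = 3} -
   ({F. F \<subseteq> {..<n div 2} \<and> card F = 3} \<union> {F. F \<subseteq> {n div 2..<n} \<and> card F = 3})"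
proof (intro equalityI subsetI)
  fix F assume "F \<in> B_edges n"
  then have F: "F \<subseteq> {..<n}" "card F = 3" "F \<inter> {..<n div 2} \<noteq> {}" "F \<inter> {n div 2..<n} \<noteq> {}"
    by (auto simp: B_edges_def)
  have "\<not> F \<subseteq> {..<n div 2}" using F(4) by auto
  moreover have "\<not> F \<subseteq> {n div 2..<n}" using F(3) by auto
  ultimately show "F \<in> {F. F \<subseteq> {..<n} \<and> card F = 3} -
   ({F. F \<subseteq> {..<n div 2} \<and> card F = 3} \<union> {F. F \<subseteq> {n div 2..<n} \<and> card F = 3})" using F by auto
next
  fix F assume F: "F \<in> {F. F \<subseteq> {..<n} \<and> card F = 3} -
   ({F. F \<subseteq> {..<n div 2} \<and> card F = 3} \<union> {F. F \<subseteq> {n div 2..<n} \<and> card F = 3})"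
  then have F1: "F \<subseteq> {..<n}" "card F = 3" "\<not> F \<subseteq> {..<n div 2}" "\<not> F \<subseteq> {n div 2..<n}" by auto
  have "F \<inter> {..<n div 2} \<noteq> {}"
  proof -
    obtain x where x: "x \<in> F" "x \<notin> {n div 2..<n}" using F1(4) by blast
    then have "x \<in> F \<inter> {..<n div 2}" using F1(1) by auto
    then show ?thesis by blast
  qed
  moreover have "F \<inter> {n div 2..<n} \<noteq> {}"
  proof -
    obtain x where x: "x \<in> F" "\<not> x < n div 2" using F1(3) by auto
    then have "x \<in> F \<inter> {n div 2..<n}" using F1(1) by auto
    then show ?thesis by blast
  qed
  ultimately show "F \<in> B_edges n" using F1 by (auto simp: B_edges_def)
qed

lemma B_finite: "finite (B_edges n)"
proof -
  have "B_edges n \<subseteq> Pow {..<n}" by (auto simp: B_edges_def)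
  then show ?thesis by (rule finite_subset) simp
qed

lemma B_sum: fixes z :: "nat \<Rightarrow> real" shows "(\<Sum>e\<in>B_edges n. \<Prod>i\<in>e. z i) = esym z {..<n} 3 - esym z {..<n div 2} 3 - esym z {n div 2..<n} 3"
proof -
  have d: "{F. F \<subseteq> {..<n div 2} \<and> card F = 3} \<inter> {F. F \<subseteq> {n div 2..<n} \<and> card F = (3::nat)} = {}"
  proof (rule ccontr)
    assume "\<not> ?thesis"
    then obtain F where "F \<subseteq> {..<n div 2}" "F \<subseteq> {n div 2..<n}" "card F = 3" by blast
    then have "F \<subseteq> {..<n div 2} \<inter> {n div 2..<n}" by auto
    moreover have "{..<n div 2} \<inter> {n div 2..<n} = {}" by auto
    ultimately have "F = {}" by blast
    with \<open>card F = 3\<close> show False by simp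
  qed
  have sub: "{F. F \<subseteq> {..<n div 2} \<and> card F = 3} \<union> {F. F \<subseteq> {n div 2..<n} \<and> card F = 3}
      \<subseteq> {F. F \<subseteq> {..<n} \<and> card F = 3}" by auto
  show ?thesis unfolding B_decomp esym_def
    by (subst sum_diff[OF _ sub]) (simp, subst sum.union_disjoint, auto simp: d)
qed

lemma B_identity:
  fixes z :: "nat \<Rightarrow> real" shows
  "6 * (\<Sum>e\<in>B_edges n. \<Prod>i\<in>e. z i) =
     3 * sum z {..<n div 2} * sum z {n div 2..<n} * (sum z {..<n div 2} + sum z {n div 2..<n})
     - 3 * sum z {n div 2..<n} * (\<Sum>i\<in>{..<n div 2}. z i ^ 2)
     - 3 * sum z {..<n div 2} * (\<Sum>i\<in>{n div 2..<n}. z i ^ 2)"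
proof -
  have U: "{..<n} = {..<n div 2} \<union> {n div 2..<n}" by auto
  have sp: "\<And>f. sum f {..<n} = sum f {..<n div 2} + sum f {n div 2..<n}"
    unfolding U by (rule sum.union_disjoint) auto
  define a where "a = sum z {..<n div 2}"
  define b where "b = sum z {n div 2..<n}"
  define pA where "pA = (\<Sum>i\<in>{..<n div 2}. z i ^ 2)"
  define pB where "pB = (\<Sum>i\<in>{n div 2..<n}. z i ^ 2)"
  define qA where "qA = (\<Sum>i\<in>{..<n div 2}. z i ^ 3)"
  define qB where "qB = (\<Sum>i\<in>{n div 2..<n}. z i ^ 3)"
  have e1: "6 * esym z {..<n} 3 = (a + b)^3 - 3 * (a + b) * (pA + pB) + 2 * (qA + qB)"
    using esym_3[of "{..<n}" z] by (simp add: sp a_def b_def pA_def pB_def qA_def qB_def)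
  have e2: "6 * esym z {..<n div 2} 3 = a^3 - 3 * a * pA + 2 * qA"
    using esym_3[of "{..<n div 2}" z] by (simp add: a_def pA_def qA_def)
  have e3: "6 * esym z {n div 2..<n} 3 = b^3 - 3 * b * pB + 2 * qB"
    using esym_3[of "{n div 2..<n}" z] by (simp add: b_def pB_def qB_def)
  have "6 * (\<Sum>e\<in>B_edges n. \<Prod>i\<in>e. z i) = 6 * esym z {..<n} 3 - 6 * esym z {..<n div 2} 3 - 6 * esym z {n div 2..<n} 3"
    by (simp add: B_sum)
  also have "\<dots> = 3 * a * b * (a + b) - 3 * b * pA - 3 * a * pB"
    unfolding e1 e2 e3 by (simp add: algebra_simps power3_eq_cube)
  finally show ?thesis by (simp add: a_def b_def pA_def pB_def)
qed

lemma B_card: "6 * real (card (B_edges n)) =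
   3 * real (n div 2) * real (n - n div 2) * (real n - 2)"
proof -
  have c: "card {n div 2..<n} = n - n div 2" by simp
  have "real (card (B_edges n)) = (\<Sum>e\<in>B_edges n. \<Prod>i\<in>e. (1::real))" by simp
  then have "6 * real (card (B_edges n)) =
     3 * real (n div 2) * real (n - n div 2) * (real (n div 2) + real (n - n div 2))
     - 3 * real (n - n div 2) * real (n div 2) - 3 * real (n div 2) * real (n - n div 2)"
    using B_identity[where n=n and z="\<lambda>_. 1"] by (simp only: c) simp
  moreover have "real (n div 2) + real (n - n div 2) = real n" by (simp flip: of_nat_add)
  ultimately show ?thesis by (simp add: algebra_simps)
qed

lemma B_lagr:
  assumes n2: "n \<ge> 2" and z0: "\<forall>i. 0 \<le> z i" and zs: "(\<Sum>i<n. z i) = 1"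
  shows "(\<Sum>e\<in>B_edges n. \<Prod>i\<in>e. z i) \<le> 1/8 * (1 - 1 / real (n - n div 2))"
proof -
  define nA where "nA = real (n div 2)"
  define nB where "nB = real (n - n div 2)"
  have nA1: "nA \<ge> 1" using n2 by (simp add: nA_def)
  have nAB: "nA \<le> nB" unfolding nA_def nB_def by simp
  define a where "a = sum z {..<n div 2}"
  define b where "b = sum z {n div 2..<n}"
  define pA where "pA = (\<Sum>i\<in>{..<n div 2}. z i ^ 2)"
  define pB where "pB = (\<Sum>i\<in>{n div 2..<n}. z i ^ 2)"
  have U: "{..<n} = {..<n div 2} \<union> {n div 2..<n}" by auto
  have ab: "a + b = 1" using zs unfolding a_def b_def U by (subst (asm) sum.union_disjoint) auto
  have a0: "a \<ge> 0" and b0: "b \<ge> 0" using z0 by (auto simp: a_def b_def sum_nonneg)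
  have cA: "a^2 \<le> pA * nA" unfolding a_def pA_def nA_def using sum_squared_le_sum_of_squares[of z "{..<n div 2}"] by simp
  have cB: "b^2 \<le> pB * nB" unfolding b_def pB_def nB_def using sum_squared_le_sum_of_squares[of z "{n div 2..<n}"] by simp
  have pA': "pA \<ge> a^2 / nB"
  proof -
    have "a^2 / nB \<le> a^2 / nA" using nA1 nAB by (intro divide_left_mono) auto
    also have "\<dots> \<le> pA" using cA nA1 by (simp add: field_simps)
    finally show ?thesis .
  qed
  have pB': "pB \<ge> b^2 / nB" using cB nA1 nAB by (simp add: field_simps)
  have "6 * (\<Sum>e\<in>B_edges n. \<Prod>i\<in>e. z i) = 3 * a * b * (a + b) - 3 * b * pA - 3 * a * pB"
    using B_identity[where n=n and z=z] by (simp add: a_def b_def pA_def pB_def)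
  also have "\<dots> \<le> 3 * a * b - 3 * b * (a^2 / nB) - 3 * a * (b^2 / nB)"
  proof -
    have "b * (a^2 / nB) \<le> b * pA" using pA' b0 by (rule mult_left_mono)
    moreover have "a * (b^2 / nB) \<le> a * pB" using pB' a0 by (rule mult_left_mono)
    ultimately show ?thesis using ab by simp
  qed
  also have "\<dots> = 3 * (a * b) * (1 - 1 / nB)"
  proof -
    have nB0: "nB \<noteq> 0" using nA1 nAB by simp
    have "3 * b * (a^2 / nB) + 3 * a * (b^2 / nB) = 3 * (a * b) * (a + b) / nB"
      using nB0 by (simp add: field_simps power2_eq_square)
    then have "3 * b * (a^2 / nB) + 3 * a * (b^2 / nB) = 3 * (a * b) / nB" using ab by simp
    then show ?thesis by (simp add: right_diff_distrib)
  qed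
  also have "\<dots> \<le> 3 * (1/4) * (1 - 1 / nB)"
  proof -
    have "4 * (a * b) = (a + b)^2 - (a - b)^2" by (simp add: power2_eq_square algebra_simps)
    moreover have "(a - b)^2 \<ge> 0" by simp
    ultimately have "4 * (a * b) \<le> 1" using ab by simp
    then have "a * b \<le> 1/4" by linarith
    moreover have "1 - 1 / nB \<ge> 0" using nA1 nAB by simp
    ultimately show ?thesis by (intro mult_right_mono) auto
  qed
  finally show ?thesis by (simp add: nB_def)
qed



lemma B_odd_ineq:
  fixes x :: real assumes x1: "x \<ge> 1"
  shows "1/8 * (1 - 1/(x+1)) * (2*x+1)^3 \<le> x * (x+1) * (2*x-1) / 2 * (1 + 8/(2*x+1)^2)"
proof -
  have p: "4*(x+1)^2*(2*x-1)*((2*x+1)^2+8) - (2*x+1)^5 = 40*x^3+52*x^2-26*x-37"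
    by (simp add: algebra_simps power2_eq_square power3_eq_cube eval_nat_numeral)
  have a: "1 * x \<le> x * x" using mult_right_mono[OF x1, of x] x1 by simp
  have b: "1 * (x * x) \<le> x * (x * x)" using mult_right_mono[OF x1, of "x*x"] x1 by simp
  have x2: "x^2 \<ge> x" "x^3 \<ge> x" using a b by (simp_all add: power2_eq_square power3_eq_cube)
  have q: "(2*x+1)^5 \<le> 4*(x+1)^2*(2*x-1)*((2*x+1)^2+8)" using p x2 x1 by linarith
  have d: "(2*x+1) > 0" "x + 1 > 0" using x1 by auto
  have L: "1/8 * (1 - 1/(x+1)) * (2*x+1)^3 = x * (2*x+1)^3 / (8*(x+1))"
    using d by (simp add: field_simps)
  have R: "x * (x+1) * (2*x-1) / 2 * (1 + 8/(2*x+1)^2) = x * (x+1) * (2*x-1) * ((2*x+1)^2+8) / (2*(2*x+1)^2)"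
    using d by (simp add: field_simps)
  have "x * (2*x+1)^3 * (2*(2*x+1)^2) = (2*x) * (2*x+1)^5" by (simp add: algebra_simps eval_nat_numeral)
  also have "\<dots> \<le> (2*x) * (4*(x+1)^2*(2*x-1)*((2*x+1)^2+8))" using q x1 by (intro mult_left_mono) auto
  also have "\<dots> = x * (x+1) * (2*x-1) * ((2*x+1)^2+8) * (8*(x+1))" by (simp add: algebra_simps power2_eq_square)
  finally have m: "x * (2*x+1)^3 * (2*(2*x+1)^2) \<le> x * (x+1) * (2*x-1) * ((2*x+1)^2+8) * (8*(x+1))" .
  have "x * (2*x+1)^3 / (8*(x+1)) \<le> x * (x+1) * (2*x-1) * ((2*x+1)^2+8) / (2*(2*x+1)^2)"
  proof -
    define P where "P = 8*(x+1)" define Q where "Q = 2*(2*x+1)^2"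
    have P: "P > 0" and Q: "Q > 0" using d by (simp_all add: P_def Q_def)
    have "x * (2*x+1)^3 / P = (x * (2*x+1)^3 * Q) / (P * Q)" using Q by simp
    also have "\<dots> \<le> (x * (x+1) * (2*x-1) * ((2*x+1)^2+8) * P) / (P * Q)"
      using m P Q by (intro divide_right_mono) (simp_all add: P_def Q_def)
    also have "\<dots> = x * (x+1) * (2*x-1) * ((2*x+1)^2+8) / Q" using P by simp
    finally show ?thesis by (simp add: P_def Q_def)
  qed
  then show ?thesis unfolding L R .
qed

lemma B_ineq:
  assumes n3: "n \<ge> 3"
  shows "1/8 * (1 - 1 / real (n - n div 2)) * real n ^ 3 \<le> real (card (B_edges n)) * (1 + 8 / real n ^ 2)"
proof -
  have card: "real (card (B_edges n)) = real (n div 2) * real (n - n div 2) * (real n - 2) / 2"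
    using B_card[of n] by (simp del: of_nat_diff add: mult_ac)
  obtain m where "n = 2 * m \<or> n = 2 * m + 1" by (metis dvd_mult_div_cancel odd_two_times_div_two_succ)
  then show ?thesis
  proof
    assume n: "n = 2 * m"
    then have m2: "m \<ge> 2" using n3 by simp
    have d: "n div 2 = m" "n - n div 2 = m" using n by auto
    have mr: "real m \<ge> 2" using m2 by simp
    have "1/8 * (1 - 1 / real m) * (2 * real m) ^ 3 = real m * real m * (2 * real m - 2) / 2"
      using mr by (simp add: field_simps eval_nat_numeral)
    also have "\<dots> \<le> real m * real m * (2 * real m - 2) / 2 * (1 + 8 / (2 * real m) ^ 2)"
    proof -
      have "real m * real m * (2 * real m - 2) / 2 \<ge> 0" using mr by simp
      moreover have "1 \<le> 1 + 8 / (2 * real m) ^ 2" by simp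
      ultimately show ?thesis by (metis mult_left_mono mult.right_neutral)
    qed
    finally show ?thesis unfolding card d using n by simp
  next
    assume n: "n = 2 * m + 1"
    then have m1: "m \<ge> 1" using n3 by simp
    have d: "n div 2 = m" "n - n div 2 = m + 1" using n by auto
    have "1/8 * (1 - 1/(real m+1)) * (2*real m+1)^3 \<le> real m * (real m+1) * (2*real m-1) / 2 * (1 + 8/(2*real m+1)^2)"
      by (rule B_odd_ineq) (use m1 in simp)
    moreover have "real m * (real m+1) * (2*real m-1) / 2 = real m * real (m + 1) * (real n - 2) / 2"
      using n by simp
    ultimately show ?thesis unfolding card d using n by (simp add: add.commute)
  qed
qed

lemma fact3: "fact 3 = (6::real)" by (simp add: eval_nat_numeral)

lemma part2:
  fixes \<alpha> :: real assumes al: "\<alpha> > 1"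
  shows "\<exists>g :: nat \<Rightarrow> real. g \<in> O(\<lambda>n. 1 / real n ^ 2) \<and>
            (\<forall>\<^sub>F n in sequentially. lambda_alpha \<alpha> n 3 (B_edges n) =
               (1 + g n) * (6 * real (card (B_edges n)) * real n powr (- 3 / \<alpha>)))"
proof (rule asymp_close[where nst = 3 and c = 8])
  fix n :: nat assume n3: "n \<ge> 3"
  define N where "N = real (card (B_edges n))"
  define T where "T = 6 * N * real n powr (- 3 / \<alpha>)"
  have npos: "real n > 0" using n3 by simp
  have Npos: "N > 0"
  proof -
    have "6 * N = 3 * real (n div 2) * real (n - n div 2) * (real n - 2)" using B_card[of n] by (simp add: N_def)
    moreover have "real (n div 2) > 0" "real (n - n div 2) > 0" "real n - 2 > 0" using n3 by auto
    ultimately show ?thesis by (smt (verit) mult_pos_pos)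
  qed
  have Tpos: "T > 0" using Npos npos by (simp add: T_def)
  have pw: "(real n powr (- 1 / \<alpha>)) ^ 3 = real n powr (- 3 / \<alpha>)"
    using npos by (simp add: powr_power)
  have pw2: "(real n ^ 3) powr (- (1 / \<alpha>)) = real n powr (- 3 / \<alpha>)"
    using npos by (simp add: pow_powr_comm[symmetric] powr_power)
  define \<Lambda> where "\<Lambda> = 1/8 * (1 - 1 / real (n - n div 2))"
  have H: "\<And>z. (\<forall>i. 0 \<le> z i) \<Longrightarrow> (\<Sum>i<n. z i) = 1 \<Longrightarrow> (\<Sum>e\<in>B_edges n. \<Prod>i\<in>e. z i) \<le> \<Lambda>"
    unfolding \<Lambda>_def using B_lagr n3 by simp
  have x0: "alpha_norm \<alpha> n (\<lambda>i. real n powr (-1/\<alpha>)) = 1" using uniform_norm[OF al] n3 by simp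
  note lb = lambda_bounds[OF al B_finite H x0, of 3]
  have val: "fact 3 * (\<Sum>e\<in>B_edges n. \<Prod>i\<in>e. real n powr (-1/\<alpha>)) = T"
  proof -
    have "(\<Sum>e\<in>B_edges n. \<Prod>i\<in>e. real n powr (-1/\<alpha>)) = N * (real n powr (-1/\<alpha>)) ^ 3"
      unfolding N_def by (rule sum_const_edges) (simp add: B_edges_def)
    then show ?thesis using pw by (simp add: fact3 T_def)
  qed
  have L0: "\<Lambda> \<ge> 0" using n3 by (simp add: \<Lambda>_def)
  have cb: "fact 3 * (N powr (1 - 1/\<alpha>) * \<Lambda> powr (1/\<alpha>)) \<le> (fact 3 * N * (real n ^ 3) powr (- (1/\<alpha>))) * (1 + 8 / real n ^ 2)"
    by (rule close_bound) (use al Npos npos L0 B_ineq[OF n3] in \<open>auto simp: \<Lambda>_def N_def\<close>)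
  show "T > 0 \<and> T \<le> lambda_alpha \<alpha> n 3 (B_edges n) \<and> lambda_alpha \<alpha> n 3 (B_edges n) \<le> T * (1 + 8 / real n ^ 2)"
    using Tpos lb val cb unfolding pw2 fact3 by (simp add: T_def N_def)
qed simp



definition cls :: "nat \<Rightarrow> nat \<Rightarrow> nat \<Rightarrow> nat set" where
  "cls r n p = {i. i < n \<and> i mod r = p}"

lemma cls_finite: "finite (cls r n p)" by (simp add: cls_def)

context
  fixes r :: nat assumes r2: "r \<ge> 2"
begin

lemma cls_union: "(\<Union>p\<in>{..<r}. cls r n p) = {..<n}"
  using r2 by (auto simp: cls_def)

lemma cls_disj: "\<forall>p\<in>{..<r}. \<forall>q\<in>{..<r}. p \<noteq> q \<longrightarrow> cls r n p \<inter> cls r n q = {}"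
  by (auto simp: cls_def)

lemma sum_cls: "(\<Sum>i<n. f i) = (\<Sum>p<r. \<Sum>i\<in>cls r n p. f i)"
proof -
  have "(\<Sum>i<n. f i) = sum f (\<Union>p\<in>{..<r}. cls r n p)" by (simp add: cls_union)
  also have "\<dots> = (\<Sum>p<r. sum f (cls r n p))"
    by (rule sum.UNION_disjoint) (auto simp: cls_finite cls_disj)
  finally show ?thesis .
qed

lemma T_decomp: "turan_edges r n = {F. F \<subseteq> {..<n} \<and> card F = 2} -
    (\<Union>p\<in>{..<r}. {F. F \<subseteq> cls r n p \<and> card F = 2})"
proof (intro equalityI subsetI)
  fix F assume "F \<in> turan_edges r n"
  then obtain i j where F: "F \<subseteq> {..<n}" "card F = 2" "i \<in> F" "j \<in> F" "i mod r \<noteq> j mod r"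
    by (auto simp: turan_edges_def)
  have "\<not> F \<subseteq> cls r n p" for p using F by (auto simp: cls_def)
  then show "F \<in> {F. F \<subseteq> {..<n} \<and> card F = 2} - (\<Union>p\<in>{..<r}. {F. F \<subseteq> cls r n p \<and> card F = 2})"
    using F by auto
next
  fix F assume F: "F \<in> {F. F \<subseteq> {..<n} \<and> card F = 2} - (\<Union>p\<in>{..<r}. {F. F \<subseteq> cls r n p \<and> card F = 2})"
  then have F1: "F \<subseteq> {..<n}" "card F = 2" and F2: "\<And>p. p < r \<Longrightarrow> \<not> F \<subseteq> cls r n p" by auto
  obtain i where i: "i \<in> F" using F1(2) by fastforce
  have "i mod r < r" using r2 by simp
  then have "\<not> F \<subseteq> cls r n (i mod r)" by (rule F2)
  then obtain j where j: "j \<in> F" "j mod r \<noteq> i mod r" using F1(1) by (auto simp: cls_def)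
  show "F \<in> turan_edges r n" using F1 i j unfolding turan_edges_def by auto
qed

lemma T_finite: "finite (turan_edges r n)"
proof -
  have "turan_edges r n \<subseteq> Pow {..<n}" by (auto simp: turan_edges_def)
  then show ?thesis by (rule finite_subset) simp
qed

lemma T_sum:
  fixes z :: "nat \<Rightarrow> real"
  shows "(\<Sum>e\<in>turan_edges r n. \<Prod>i\<in>e. z i) = esym z {..<n} 2 - (\<Sum>p<r. esym z (cls r n p) 2)"
proof -
  have sub: "(\<Union>p\<in>{..<r}. {F. F \<subseteq> cls r n p \<and> card F = 2}) \<subseteq> {F. F \<subseteq> {..<n} \<and> card F = 2}"
    by (auto simp: cls_def)
  have disj: "\<forall>p\<in>{..<r}. \<forall>q\<in>{..<r}. p \<noteq> q \<longrightarrow>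
      {F. F \<subseteq> cls r n p \<and> card F = 2} \<inter> {F. F \<subseteq> cls r n q \<and> card F = (2::nat)} = {}"
  proof (intro ballI impI)
    fix p q assume pq: "p \<in> {..<r}" "q \<in> {..<r}" "p \<noteq> q"
    show "{F. F \<subseteq> cls r n p \<and> card F = 2} \<inter> {F. F \<subseteq> cls r n q \<and> card F = (2::nat)} = {}"
    proof (rule ccontr)
      assume "\<not> ?thesis"
      then obtain F where F: "F \<subseteq> cls r n p" "F \<subseteq> cls r n q" "card F = 2" by blast
      then have "F \<subseteq> cls r n p \<inter> cls r n q" by auto
      also have "\<dots> = {}" using cls_disj pq by blast
      finally show False using F(3) by simp
    qed
  qed
  have "(\<Sum>F\<in>(\<Union>p\<in>{..<r}. {F. F \<subseteq> cls r n p \<and> card F = 2}). \<Prod>i\<in>F. z i)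
      = (\<Sum>p<r. esym z (cls r n p) 2)"
    unfolding esym_def by (rule sum.UNION_disjoint) (auto simp: cls_finite disj)
  then show ?thesis unfolding T_decomp esym_def
    by (subst sum_diff[OF _ sub]) auto
qed

lemma T_identity:
  fixes z :: "nat \<Rightarrow> real"
  shows "2 * (\<Sum>e\<in>turan_edges r n. \<Prod>i\<in>e. z i) = (\<Sum>i<n. z i)^2 - (\<Sum>p<r. (sum z (cls r n p))^2)"
proof -
  have "2 * (\<Sum>e\<in>turan_edges r n. \<Prod>i\<in>e. z i) = 2 * esym z {..<n} 2 - (\<Sum>p<r. 2 * esym z (cls r n p) 2)"
    by (simp add: T_sum sum_distrib_left)
  also have "\<dots> = ((\<Sum>i<n. z i)^2 - (\<Sum>i<n. z i ^ 2)) - (\<Sum>p<r. (sum z (cls r n p))^2 - (\<Sum>i\<in>cls r n p. z i ^ 2))"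
    by (simp add: esym_2 cls_finite)
  also have "\<dots> = (\<Sum>i<n. z i)^2 - (\<Sum>p<r. (sum z (cls r n p))^2)"
    by (simp add: sum_subtractf sum_cls[of "\<lambda>i. z i ^ 2"])
  finally show ?thesis .
qed

lemma T_lagr:
  assumes z0: "\<forall>i. 0 \<le> z i" and zs: "(\<Sum>i<n. z i) = 1"
  shows "(\<Sum>e\<in>turan_edges r n. \<Prod>i\<in>e. z i) \<le> (1 - 1 / real r) / 2"
proof -
  have s: "(\<Sum>p<r. sum z (cls r n p)) = 1" using zs sum_cls[of z] by simp
  have "(\<Sum>p<r. sum z (cls r n p))^2 \<le> (\<Sum>p<r. (sum z (cls r n p))^2) * real r"
    using sum_squared_le_sum_of_squares[of "\<lambda>p. sum z (cls r n p)" "{..<r}"] by simp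
  then have "1 / real r \<le> (\<Sum>p<r. (sum z (cls r n p))^2)" using s r2 by (simp add: field_simps)
  then have "2 * (\<Sum>e\<in>turan_edges r n. \<Prod>i\<in>e. z i) \<le> 1 - 1 / real r"
    using T_identity[of z] zs by simp
  then show ?thesis by simp
qed

lemma cls_card_bounds:
  assumes p: "p < r"
  shows "n div r \<le> card (cls r n p)" "card (cls r n p) \<le> n div r + 1"
proof -
  have r0: "r > 0" using r2 by simp
  have "(\<lambda>i. i div r) ` cls r n p \<subseteq> {..n div r}" by (auto simp: cls_def div_le_mono)
  moreover have "inj_on (\<lambda>i. i div r) (cls r n p)"
  proof (rule inj_onI)
    fix i j assume "i \<in> cls r n p" "j \<in> cls r n p" "i div r = j div r"
    then have m: "i mod r = j mod r" and d: "i div r = j div r" by (auto simp: cls_def)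
    have "i = i div r * r + i mod r" by (rule div_mult_mod_eq[symmetric])
    also have "\<dots> = j div r * r + j mod r" unfolding m d ..
    also have "\<dots> = j" by (rule div_mult_mod_eq)
    finally show "i = j" .
  qed
  ultimately have "card (cls r n p) \<le> card {..n div r}"
    using card_mono[of "{..n div r}" "(\<lambda>i. i div r) ` cls r n p"] card_image[of "\<lambda>i. i div r" "cls r n p"] by simp
  then show "card (cls r n p) \<le> n div r + 1" by simp
  have "(\<lambda>q. q * r + p) ` {..<n div r} \<subseteq> cls r n p"
  proof
    fix i assume "i \<in> (\<lambda>q. q * r + p) ` {..<n div r}"
    then obtain q where q: "q < n div r" "i = q * r + p" by auto
    have "(q + 1) * r \<le> (n div r) * r" using q(1) by (intro mult_right_mono) auto
    also have "\<dots> \<le> n" by (simp add: div_times_less_eq_dividend)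
    finally have "q * r + p < n" using p by simp
    moreover have "(q * r + p) mod r = p" using p by simp
    ultimately show "i \<in> cls r n p" using q by (simp add: cls_def)
  qed
  moreover have "inj_on (\<lambda>q. q * r + p) {..<n div r}" using r0 by (auto simp: inj_on_def)
  ultimately have "card {..<n div r} \<le> card (cls r n p)"
    using card_mono[OF cls_finite, of "(\<lambda>q. q * r + p) ` {..<n div r}" r n p] card_image[of "\<lambda>q. q * r + p" "{..<n div r}"] by simp
  then show "n div r \<le> card (cls r n p)" by simp
qed

lemma T_card: "2 * real (card (turan_edges r n)) = real n ^ 2 - (\<Sum>p<r. real (card (cls r n p)) ^ 2)"
  using T_identity[of "\<lambda>_. 1"] by simp

lemma cls_sq_bound: "(\<Sum>p<r. real (card (cls r n p)) ^ 2) \<le> real n ^ 2 / real r + real r"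
proof -
  define c where "c p = real (card (cls r n p))" for p
  define u where "u = real n / real r"
  have r0: "real r > 0" using r2 by simp
  have sc: "(\<Sum>p<r. c p) = real n" using sum_cls[of "\<lambda>_. 1::real" n] by (simp add: c_def)
  have ub: "real (n div r) \<le> u" "u \<le> real (n div r) + 1"
  proof -
    have "n = n div r * r + n mod r" by simp
    then have e: "real n = real (n div r) * real r + real (n mod r)" by (metis of_nat_add of_nat_mult)
    have m: "real (n mod r) < real r" using r2 by simp
    show "real (n div r) \<le> u" using e r0 by (simp add: u_def field_simps)
    show "u \<le> real (n div r) + 1" using e r0 m by (simp add: u_def field_simps)
  qed
  have d: "(c p - u)^2 \<le> 1" if "p < r" for p
  proof -
    have "real (n div r) \<le> c p" "c p \<le> real (n div r) + 1"
      using cls_card_bounds[OF that, of n] by (simp_all add: c_def)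
    then have "\<bar>c p - u\<bar> \<le> 1" using ub by linarith
    then have "\<bar>c p - u\<bar>^2 \<le> 1" by (intro power_le_one) auto
    then show ?thesis by simp
  qed
  have "(\<Sum>p<r. (c p - u)^2) = (\<Sum>p<r. c p ^ 2) - 2 * u * (\<Sum>p<r. c p) + real r * u^2"
    by (simp add: power2_diff sum_subtractf sum.distrib sum_distrib_left algebra_simps)
  also have "\<dots> = (\<Sum>p<r. c p ^ 2) - real n ^ 2 / real r"
    unfolding sc u_def using r0 by (simp add: field_simps power2_eq_square)
  finally have "(\<Sum>p<r. c p ^ 2) - real n ^ 2 / real r = (\<Sum>p<r. (c p - u)^2)" by simp
  also have "\<dots> \<le> (\<Sum>p<r. 1)" using d by (intro sum_mono) auto
  finally have "(\<Sum>p<r. c p ^ 2) \<le> real n ^ 2 / real r + real r" by simp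
  then show ?thesis unfolding c_def .
qed

end



lemma fact2: "fact 2 = (2::real)" by (simp add: eval_nat_numeral)

lemma part3:
  fixes \<alpha> :: real and r :: nat assumes al: "\<alpha> > 1" and r2: "r \<ge> 2"
  shows "\<exists>g :: nat \<Rightarrow> real. g \<in> O(\<lambda>n. 1 / real n ^ 2) \<and>
            (\<forall>\<^sub>F n in sequentially. lambda_alpha \<alpha> n 2 (turan_edges r n) =
               (1 + g n) * (2 * real (card (turan_edges r n)) * real n powr (- 2 / \<alpha>)))"
proof (rule asymp_close[where nst = "2 * r" and c = "4 * real r"])
  fix n :: nat assume n2r: "n \<ge> 2 * r"
  define N where "N = real (card (turan_edges r n))"
  define T where "T = 2 * N * real n powr (- 2 / \<alpha>)"
  have rpos: "real r \<ge> 2" using r2 by simp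
  have nr: "real n \<ge> 2 * real r" using n2r by (metis of_nat_le_iff of_nat_mult of_nat_numeral)
  have npos: "real n > 0" using nr rpos by simp
  have n2: "real n ^ 2 \<ge> 4 * real r"
  proof -
    have "real n ^ 2 \<ge> (2 * real r)^2" using nr rpos by (intro power_mono) auto
    moreover have "(2 * real r)^2 \<ge> 4 * real r" using rpos by (simp add: power2_eq_square)
    ultimately show ?thesis by linarith
  qed
  have twoN: "2 * N \<ge> real n ^ 2 * (1 - 1 / real r) - real r"
  proof -
    have e1: "2 * N = real n ^ 2 - (\<Sum>p<r. real (card (cls r n p)) ^ 2)" using T_card[OF r2, of n] by (simp add: N_def)
    have e2: "real n ^ 2 * (1 - 1 / real r) = real n ^ 2 - real n ^ 2 / real r" by (simp add: right_diff_distrib)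
    show ?thesis using e1 e2 cls_sq_bound[OF r2, of n] by linarith
  qed
  have half: "real n ^ 2 * (1 - 1 / real r) \<ge> real n ^ 2 / 2"
  proof -
    have "1 - 1 / real r \<ge> 1/2" using rpos by (simp add: field_simps)
    then have "real n ^ 2 * (1/2) \<le> real n ^ 2 * (1 - 1 / real r)" by (intro mult_left_mono) auto
    then show ?thesis by simp
  qed
  have Nq: "2 * N \<ge> real n ^ 2 / 4" using twoN half n2 by linarith
  have Npos: "N > 0" using Nq npos by (smt (verit) zero_less_power divide_pos_pos)
  have Tpos: "T > 0" using Npos npos by (simp add: T_def)
  have pw: "(real n powr (- 1 / \<alpha>)) ^ 2 = real n powr (- 2 / \<alpha>)"
    using npos by (simp add: powr_power)
  have pw2: "(real n ^ 2) powr (- (1 / \<alpha>)) = real n powr (- 2 / \<alpha>)"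
    using npos by (simp add: pow_powr_comm[symmetric] powr_power)
  define \<Lambda> where "\<Lambda> = (1 - 1 / real r) / 2"
  have H: "\<And>z. (\<forall>i. 0 \<le> z i) \<Longrightarrow> (\<Sum>i<n. z i) = 1 \<Longrightarrow> (\<Sum>e\<in>turan_edges r n. \<Prod>i\<in>e. z i) \<le> \<Lambda>"
    unfolding \<Lambda>_def using T_lagr[OF r2] by simp
  have x0: "alpha_norm \<alpha> n (\<lambda>i. real n powr (-1/\<alpha>)) = 1" using uniform_norm[OF al] npos by simp
  note lb = lambda_bounds[OF al T_finite[OF r2] H x0, of 2]
  have val: "fact 2 * (\<Sum>e\<in>turan_edges r n. \<Prod>i\<in>e. real n powr (-1/\<alpha>)) = T"
  proof -
    have "(\<Sum>e\<in>turan_edges r n. \<Prod>i\<in>e. real n powr (-1/\<alpha>)) = N * (real n powr (-1/\<alpha>)) ^ 2"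
      unfolding N_def by (rule sum_const_edges) (simp add: turan_edges_def)
    then show ?thesis using pw by (simp add: fact2 T_def)
  qed
  have L0: "\<Lambda> \<ge> 0" using rpos by (simp add: \<Lambda>_def)
  have key: "\<Lambda> * real n ^ 2 \<le> N * (1 + 4 * real r / real n ^ 2)"
  proof -
    have a: "\<Lambda> * real n ^ 2 \<le> N + real r / 2" using twoN by (simp add: \<Lambda>_def field_simps)
    have "N * (4 * real r / real n ^ 2) = (2 * N) * (2 * real r / real n ^ 2)" by (simp add: field_simps)
    also have "\<dots> \<ge> (real n ^ 2 / 4) * (2 * real r / real n ^ 2)"
      using Nq rpos npos by (intro mult_right_mono) auto
    also have "(real n ^ 2 / 4) * (2 * real r / real n ^ 2) = real r / 2" using npos by (simp add: field_simps)
    finally have "N * (4 * real r / real n ^ 2) \<ge> real r / 2" .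
    then show ?thesis using a by (simp add: distrib_left)
  qed
  have cb: "fact 2 * (N powr (1 - 1/\<alpha>) * \<Lambda> powr (1/\<alpha>)) \<le> (fact 2 * N * (real n ^ 2) powr (- (1/\<alpha>))) * (1 + 4 * real r / real n ^ 2)"
    by (rule close_bound) (use al Npos npos L0 key rpos in auto)
  show "T > 0 \<and> T \<le> lambda_alpha \<alpha> n 2 (turan_edges r n) \<and> lambda_alpha \<alpha> n 2 (turan_edges r n) \<le> T * (1 + 4 * real r / real n ^ 2)"
    using Tpos lb val cb unfolding pw2 fact2 by (simp add: T_def N_def)
qed simp

theorem lemma13:
  fixes \<alpha> :: real
  assumes "\<alpha> > 1"
  shows "(\<forall>t k n::nat. 1 \<le> t \<and> t \<le> k \<and> k \<le> n \<and> t < n \<longrightarrow>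
            lambda_alpha \<alpha> n k (star_edges k t n) =
              fact k * real ((n - t) choose (k - t)) * real k powr (- real k / \<alpha>)
              * ((real (k - t) / real (n - t)) ^ (k - t)) powr (1 / \<alpha>))
       \<and> (\<exists>g :: nat \<Rightarrow> real. g \<in> O(\<lambda>n. 1 / real n ^ 2) \<and>
            (\<forall>\<^sub>F n in sequentially. lambda_alpha \<alpha> n 3 (B_edges n) =
               (1 + g n) * (6 * real (card (B_edges n)) * real n powr (- 3 / \<alpha>))))
       \<and> (\<forall>r::nat. r \<ge> 2 \<longrightarrow> (\<exists>g :: nat \<Rightarrow> real. g \<in> O(\<lambda>n. 1 / real n ^ 2) \<and>
            (\<forall>\<^sub>F n in sequentially. lambda_alpha \<alpha> n 2 (turan_edges r n) =
               (1 + g n) * (2 * real (card (turan_edges r n)) * real n powr (- 2 / \<alpha>)))))"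
  proof (intro conjI allI impI)
  fix t k n :: nat
  assume h: "1 \<le> t \<and> t \<le> k \<and> k \<le> n \<and> t < n"
  show "lambda_alpha \<alpha> n k (star_edges k t n) =
              fact k * real ((n - t) choose (k - t)) * real k powr (- real k / \<alpha>)
              * ((real (k - t) / real (n - t)) ^ (k - t)) powr (1 / \<alpha>)"
    using part1[where t=t and k=k and n=n] h assms by blast
next
  show "\<exists>g :: nat \<Rightarrow> real. g \<in> O(\<lambda>n. 1 / real n ^ 2) \<and>
            (\<forall>\<^sub>F n in sequentially. lambda_alpha \<alpha> n 3 (B_edges n) =
               (1 + g n) * (6 * real (card (B_edges n)) * real n powr (- 3 / \<alpha>)))"
    by (rule part2[OF assms])
next
  fix r :: nat assume "r \<ge> 2"
  then show "\<exists>g :: nat \<Rightarrow> real. g \<in> O(\<lambda>n. 1 / real n ^ 2) \<and>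
            (\<forall>\<^sub>F n in sequentially. lambda_alpha \<alpha> n 2 (turan_edges r n) =
               (1 + g n) * (2 * real (card (turan_edges r n)) * real n powr (- 2 / \<alpha>)))"
    by (rule part3[OF assms])
qed

end
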